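(* Let $(\mathcal{X},d)$ be a finite metric space, $P$ a probability distribution on $\mathcal{X}$, $k\ge1$ an integer, and $O\in\mathcal{X}_k$ an optimal $k$-RP solution. Then there exists a $k$-multiset $S$ that is returned with positive probability by the variance-reduced distribution $\widetilde{P}_k$ such that $\mathbb{E}_{X\sim P_k}[d_k(S,X)]\le 4\cdot \mathbb{E}_{X\sim P_k}[d_k(O,X)]$.
   Context: $\mathcal{X}_k$ is the set of multisets of exactly $k$ points of $\mathcal{X}$. For $U,V\in\mathcal{X}_k$, $d_k(U,V)$ is the minimum, over perfect matchings between the $k$ elements of $U$ and the $k$ elements of $V$ (with multiplicity), of the sum of the distances of matched pairs. $P_k$ is the distribution of the multiset of $k$ points drawn i.i.d. from $P$. The $k$-RP cost of $S$ is $\mathbb{E}_{X\sim P_k}[d_k(S,X)]$, and $O$ minimizes it. The distribution $\widetilde{P}_k$ on $\mathcal{X}_k$: for each $x\in\mathcal{X}$ the multiset contains $\lfloor P(x)k\rfloor$ copies of $x$; each of the remaining $r=k-\sum_{x}\lfloor P(x)k\rfloor$ points (if $r>0$) is chosen independently, equal to $x$ with probability $\frac{P(x)-\lfloor P(x)k\rfloor/k}{\sum_{y\in\mathcal{X}}(P(y)-\lfloor P(y)k\rfloor/k)}$. *)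

theory Defs
  imports Complex_Main "HOL-Library.Multiset"
begin

definition finite_metric_space :: "'a set \<Rightarrow> ('a \<Rightarrow> 'a \<Rightarrow> real) \<Rightarrow> bool" where
  "finite_metric_space X d \<longleftrightarrow> finite X \<and> X \<noteq> {} \<and>
     (\<forall>x\<in>X. \<forall>y\<in>X. d x y \<ge> 0 \<and> (d x y = 0 \<longleftrightarrow> x = y) \<and> d x y = d y x) \<and>
     (\<forall>x\<in>X. \<forall>y\<in>X. \<forall>z\<in>X. d x z \<le> d x y + d y z)"

definition prob_dist :: "'a set \<Rightarrow> ('a \<Rightarrow> real) \<Rightarrow> bool" where
  "prob_dist X P \<longleftrightarrow> (\<forall>x\<in>X. P x \<ge> 0) \<and> (\<Sum>x\<in>X. P x) = 1"

definition kmsets :: "'a set \<Rightarrow> nat \<Rightarrow> 'a multiset set" where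
  "kmsets X k = {U. size U = k \<and> set_mset U \<subseteq> X}"

text \<open>d_k(U,V): minimum over perfect matchings (listing U and V in some order and
  matching positionwise) of the sum of distances of matched pairs.\<close>
definition dk :: "('a \<Rightarrow> 'a \<Rightarrow> real) \<Rightarrow> 'a multiset \<Rightarrow> 'a multiset \<Rightarrow> real" where
  "dk d U V = Min {(\<Sum>i<length xs. d (xs ! i) (ys ! i)) | xs ys. mset xs = U \<and> mset ys = V}"

text \<open>k-RP cost: E_{X ~ P_k}[d_k(S,X)], where the sample is k i.i.d. draws from P.\<close>
definition krp_cost :: "'a set \<Rightarrow> ('a \<Rightarrow> 'a \<Rightarrow> real) \<Rightarrow> ('a \<Rightarrow> real) \<Rightarrow> nat \<Rightarrow> 'a multiset \<Rightarrow> real" where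
  "krp_cost X d P k S =
     (\<Sum>xs\<in>{xs. set xs \<subseteq> X \<and> length xs = k}. (\<Prod>x\<leftarrow>xs. P x) * dk d S (mset xs))"

text \<open>Deterministic part of tilde P_k: floor(P(x) k) copies of each x.\<close>
definition base_ms :: "'a set \<Rightarrow> ('a \<Rightarrow> real) \<Rightarrow> nat \<Rightarrow> 'a multiset" where
  "base_ms X P k = (\<Sum>x\<in>X. replicate_mset (nat \<lfloor>P x * real k\<rfloor>) x)"

definition resid :: "('a \<Rightarrow> real) \<Rightarrow> nat \<Rightarrow> 'a \<Rightarrow> real" where
  "resid P k x = P x - real_of_int \<lfloor>P x * real k\<rfloor> / real k"

text \<open>Probability of choosing x for each remaining point.\<close>
definition resid_prob :: "'a set \<Rightarrow> ('a \<Rightarrow> real) \<Rightarrow> nat \<Rightarrow> 'a \<Rightarrow> real" where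
  "resid_prob X P k x = resid P k x / (\<Sum>y\<in>X. resid P k y)"

definition rem_count :: "'a set \<Rightarrow> ('a \<Rightarrow> real) \<Rightarrow> nat \<Rightarrow> nat" where
  "rem_count X P k = k - size (base_ms X P k)"

text \<open>Probability that tilde P_k returns the multiset S: sum over all sequences of
  independent choices of the r remaining points that produce S.\<close>
definition ptilde_prob :: "'a set \<Rightarrow> ('a \<Rightarrow> real) \<Rightarrow> nat \<Rightarrow> 'a multiset \<Rightarrow> real" where
  "ptilde_prob X P k S =
     (\<Sum>ys\<in>{ys. set ys \<subseteq> X \<and> length ys = rem_count X P k \<and> base_ms X P k + mset ys = S}.
        (\<Prod>y\<leftarrow>ys. resid_prob X P k y))"

end

theory Submission
  imports Defs
begin

lemma lin_sys:
  fixes A :: "('e \<Rightarrow> real) set"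
  assumes "finite E" "finite A" "card A < card E"
  shows "\<exists>g. (\<forall>e. e \<notin> E \<longrightarrow> g e = 0) \<and> (\<exists>e\<in>E. g e \<noteq> 0) \<and>
             (\<forall>a\<in>A. (\<Sum>e\<in>E. a e * g e) = 0)"
  using assms
proof (induction "card A" arbitrary: A E rule: less_induct)
  case less
  show ?case
  proof (cases "A = {}")
    case True
    from less.prems have "E \<noteq> {}" by auto
    then obtain e0 where "e0 \<in> E" by blast
    then show ?thesis using True
      by (intro exI[of _ "\<lambda>e. if e = e0 then 1 else 0"]) auto
  next
    case False
    then obtain a where aA: "a \<in> A" by blast
    define A0 where "A0 = A - {a}"
    have fA0: "finite A0" using less.prems by (simp add: A0_def)
    have cA0: "card A0 < card A" using aA less.prems unfolding A0_def by (intro card_Diff1_less) auto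
    have cA0': "card A0 = card A - 1" using aA less.prems by (simp add: A0_def)
    show ?thesis
    proof (cases "\<forall>e\<in>E. a e = 0")
      case True
      have "card A0 < card E" using cA0 less.prems by simp
      from less.hyps[OF cA0 less.prems(1) fA0 this] obtain g where
        g: "\<forall>e. e \<notin> E \<longrightarrow> g e = 0" "\<exists>e\<in>E. g e \<noteq> 0" "\<forall>b\<in>A0. (\<Sum>e\<in>E. b e * g e) = 0"
        by blast
      show ?thesis
      proof (intro exI[of _ g] conjI ballI)
        fix b assume "b \<in> A"
        then show "(\<Sum>e\<in>E. b e * g e) = 0"
          using g(3) True by (cases "b = a") (auto simp: A0_def)
      qed (use g in auto)
    next
      case False
      then obtain e0 where e0: "e0 \<in> E" "a e0 \<noteq> 0" by blast
      define A' where "A' = (\<lambda>b. \<lambda>e. b e - b e0 * a e / a e0) ` A0"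
      define E' where "E' = E - {e0}"
      have fA': "finite A'" using fA0 by (simp add: A'_def)
      have fE': "finite E'" using less.prems by (simp add: E'_def)
      have cA': "card A' \<le> card A0" unfolding A'_def using fA0 by (rule card_image_le)
      have cE': "card E' = card E - 1" using e0 less.prems by (simp add: E'_def)
      have lt1: "card A' < card A" using cA' cA0 by simp
      have cpos: "card A > 0" using aA less.prems(2) card_gt_0_iff by blast
      have lt2: "card A' < card E'" using cA' cA0' cE' less.prems(3) cpos
        by linarith
      from less.hyps[OF lt1 fE' fA' lt2] obtain g' where
        g': "\<forall>e. e \<notin> E' \<longrightarrow> g' e = 0" "\<exists>e\<in>E'. g' e \<noteq> 0"
            "\<forall>b\<in>A'. (\<Sum>e\<in>E'. b e * g' e) = 0"
        by blast
      define s where "s = (\<Sum>e\<in>E'. a e * g' e)"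
      define g where "g = g'(e0 := - s / a e0)"
      have split: "(\<Sum>e\<in>E. b e * g e) = b e0 * g e0 + (\<Sum>e\<in>E'. b e * g' e)" for b
      proof -
        have "(\<Sum>e\<in>E. b e * g e) = b e0 * g e0 + (\<Sum>e\<in>E'. b e * g e)"
          using e0 less.prems by (simp add: E'_def sum.remove)
        also have "(\<Sum>e\<in>E'. b e * g e) = (\<Sum>e\<in>E'. b e * g' e)"
          by (rule sum.cong) (auto simp: g_def E'_def)
        finally show ?thesis .
      qed
      show ?thesis
      proof (intro exI[of _ g] conjI ballI)
        show "\<forall>e. e \<notin> E \<longrightarrow> g e = 0" using g'(1) e0 by (auto simp: g_def E'_def)
        show "\<exists>e\<in>E. g e \<noteq> 0" using g'(2) by (auto simp: g_def E'_def)
        fix b assume bA: "b \<in> A"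
        show "(\<Sum>e\<in>E. b e * g e) = 0"
        proof (cases "b = a")
          case True
          then show ?thesis using split[of a] e0 by (simp add: g_def s_def)
        next
          case False
          then have "b \<in> A0" using bA by (simp add: A0_def)
          then have "(\<Sum>e\<in>E'. (b e - b e0 * a e / a e0) * g' e) = 0"
            using g'(3) by (auto simp: A'_def)
          then have "(\<Sum>e\<in>E'. b e * g' e) - b e0 / a e0 * s = 0"
            by (simp add: s_def algebra_simps sum_subtractf sum_distrib_left)
          then show ?thesis using split[of b] e0 by (simp add: g_def field_simps)
        qed
      qed
    qed
  qed
qed

lemma fiber_ge2:
  fixes M :: "'i \<times> 'j \<Rightarrow> real"
  assumes fin: "finite I" "finite J"
    and rows: "\<forall>i\<in>I. (\<Sum>j\<in>J. M (i,j)) \<in> \<int>"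
    and F: "F = {e \<in> I \<times> J. M e \<notin> \<int>}"
    and i: "i \<in> fst ` F"
  shows "2 \<le> card {e\<in>F. fst e = i}"
proof (rule ccontr)
  assume "\<not> 2 \<le> card {e\<in>F. fst e = i}"
  moreover have finF: "finite F" using fin F by (auto intro: finite_subset)
  moreover obtain e1 where e1: "e1 \<in> F" "fst e1 = i" using i by auto
  ultimately have card1: "card {e\<in>F. fst e = i} = 1"
  proof -
    assume a: "\<not> 2 \<le> card {e\<in>F. fst e = i}" "finite F" "e1 \<in> F" "fst e1 = i"
    have ne: "{e\<in>F. fst e = i} \<noteq> {}" using a(3,4) by blast
    have "card {e\<in>F. fst e = i} > 0" using ne a(2) by (subst card_gt_0_iff) auto
    then show ?thesis using a(1) by linarith
  qed
  obtain j1 where ej1: "e1 = (i, j1)" using e1 by (cases e1) auto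
  have sing: "{e\<in>F. fst e = i} = {e1}"
    using card1 e1 by (metis (mono_tags, lifting) card_1_singletonE mem_Collect_eq singletonD)
  have iI: "i \<in> I" and j1J: "j1 \<in> J" using e1 ej1 F by auto
  have other: "M (i,j) \<in> \<int>" if "j \<in> J - {j1}" for j
  proof (rule ccontr)
    assume "M (i,j) \<notin> \<int>"
    then have "(i,j) \<in> {e\<in>F. fst e = i}" using that iI F by auto
    then show False using sing ej1 that by auto
  qed
  have "(\<Sum>j\<in>J. M (i,j)) = M (i,j1) + (\<Sum>j\<in>J - {j1}. M (i,j))"
    using fin j1J by (simp add: sum.remove)
  moreover have "(\<Sum>j\<in>J - {j1}. M (i,j)) \<in> \<int>" using other by (intro Ints_sum) auto
  ultimately have "M (i,j1) \<in> \<int>" using rows iI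
    by (metis Ints_diff add_diff_cancel_right')
  then show False using e1 ej1 F by auto
qed

lemma card_fibers:
  assumes "finite F" "\<forall>i\<in>f ` F. 2 \<le> card {e\<in>F. f e = i}"
  shows "2 * card (f ` F) \<le> card F"
proof -
  have "card F = (\<Sum>i\<in>f ` F. card {e\<in>F. f e = i})"
    using sum.group[OF assms(1) finite_imageI[OF assms(1)], where g=f and h="\<lambda>_. 1::nat"] by simp
  moreover have "(\<Sum>i\<in>f ` F. 2) \<le> (\<Sum>i\<in>f ` F. card {e\<in>F. f e = i})"
    using assms(2) by (intro sum_mono) auto
  ultimately show ?thesis by simp
qed

lemma mult_delta: "(if P then 1 else 0) * (y::real) = (if P then y else 0)" by simp

lemma row_conv:
  fixes g :: "'i \<times> 'j \<Rightarrow> real"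
  assumes "finite I" "finite J" "F \<subseteq> I \<times> J" "\<forall>e. e \<notin> F \<longrightarrow> g e = 0" "i \<in> I"
  shows "(\<Sum>e\<in>F. (if fst e = i then 1 else 0) * g e) = (\<Sum>j\<in>J. g (i,j))"
proof -
  have "(\<Sum>e\<in>F. (if fst e = i then 1 else 0) * g e) = (\<Sum>e\<in>I \<times> J. (if fst e = i then 1 else 0) * g e)"
    using assms by (intro sum.mono_neutral_left) auto
  also have "\<dots> = (\<Sum>i'\<in>I. \<Sum>j\<in>J. (if i' = i then 1 else 0) * g (i',j))"
    by (simp add: sum.cartesian_product case_prod_unfold)
  also have "\<dots> = (\<Sum>i'\<in>I. (if i' = i then (\<Sum>j\<in>J. g (i',j)) else 0))"
    by (rule sum.cong) auto
  also have "\<dots> = (\<Sum>j\<in>J. g (i,j))"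
    using assms by (simp add: sum.delta)
  finally show ?thesis .
qed

lemma col_conv:
  fixes g :: "'i \<times> 'j \<Rightarrow> real"
  assumes "finite I" "finite J" "F \<subseteq> I \<times> J" "\<forall>e. e \<notin> F \<longrightarrow> g e = 0" "j \<in> J"
  shows "(\<Sum>e\<in>F. (if snd e = j then 1 else 0) * g e) = (\<Sum>i\<in>I. g (i,j))"
proof -
  have "(\<Sum>e\<in>F. (if snd e = j then 1 else 0) * g e) = (\<Sum>e\<in>I \<times> J. (if snd e = j then 1 else 0) * g e)"
    using assms by (intro sum.mono_neutral_left) auto
  also have "\<dots> = (\<Sum>i\<in>I. \<Sum>j'\<in>J. (if j' = j then 1 else 0) * g (i,j'))"
    by (simp add: sum.cartesian_product case_prod_unfold)
  also have "\<dots> = (\<Sum>i\<in>I. g (i,j))"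
    using assms by (intro sum.cong) (auto simp: mult_delta sum.delta')
  finally show ?thesis .
qed

lemma kernel:
  fixes M :: "'i \<times> 'j \<Rightarrow> real"
  assumes fin: "finite I" "finite J"
    and rows: "\<forall>i\<in>I. (\<Sum>j\<in>J. M (i,j)) \<in> \<int>"
    and cols: "\<forall>j\<in>J. (\<Sum>i\<in>I. M (i,j)) \<in> \<int>"
    and F: "F = {e \<in> I \<times> J. M e \<notin> \<int>}" and Fne: "F \<noteq> {}"
  shows "\<exists>g::'i\<times>'j\<Rightarrow>real. (\<forall>e. e \<notin> F \<longrightarrow> g e = 0) \<and> (\<exists>e\<in>F. g e \<noteq> 0) \<and>
             (\<forall>i\<in>I. (\<Sum>j\<in>J. g (i,j)) = 0) \<and> (\<forall>j\<in>J. (\<Sum>i\<in>I. g (i,j)) = 0)"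
proof -
  have finF: "finite F" using fin F by (auto intro: finite_subset)
  have FIJ: "F \<subseteq> I \<times> J" using F by auto
  define M' where "M' = (\<lambda>(j,i). M (i,j))"
  have F': "prod.swap ` F = {e \<in> J \<times> I. M' e \<notin> \<int>}"
    using F by (auto simp: M'_def image_iff)
  have rows': "\<forall>j\<in>J. (\<Sum>i\<in>I. M' (j,i)) \<in> \<int>" using cols by (simp add: M'_def)
  have h1: "2 * card (fst ` F) \<le> card F"
    using fiber_ge2[OF fin rows F] finF by (intro card_fibers) auto
  have "\<forall>j\<in>fst ` (prod.swap ` F). 2 \<le> card {e\<in>prod.swap ` F. fst e = j}"
    using fiber_ge2[OF fin(2,1) rows' F'] by blast
  then have "\<forall>j\<in>snd ` F. 2 \<le> card {e\<in>F. snd e = j}"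
  proof -
    have eq: "{e\<in>prod.swap ` F. fst e = j} = prod.swap ` {e\<in>F. snd e = j}" for j by auto
    have "card (prod.swap ` {e\<in>F. snd e = j}) = card {e\<in>F. snd e = j}" for j
      by (rule card_image) (auto intro: inj_onI)
    moreover have "fst ` prod.swap ` F = snd ` F" by force
    ultimately show "\<forall>j\<in>fst ` (prod.swap ` F). 2 \<le> card {e\<in>prod.swap ` F. fst e = j} \<Longrightarrow> ?thesis"
      using eq by metis
  qed
  then have h2: "2 * card (snd ` F) \<le> card F"
    using finF by (intro card_fibers) auto
  obtain j0 where j0: "j0 \<in> snd ` F" using Fne by auto
  define rowf where "rowf = (\<lambda>i. \<lambda>e::'i\<times>'j. if fst e = i then (1::real) else 0)"
  define colf where "colf = (\<lambda>j. \<lambda>e::'i\<times>'j. if snd e = j then (1::real) else 0)"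
  define A where "A = rowf ` (fst ` F) \<union> colf ` (snd ` F - {j0})"
  have finA: "finite A" using finF by (simp add: A_def)
  have "card A \<le> card (fst ` F) + card (snd ` F - {j0})"
    unfolding A_def by (rule order_trans[OF card_Un_le add_mono]) (auto intro: card_image_le finF)
  also have "card (snd ` F - {j0}) = card (snd ` F) - 1" using j0 finF by simp
  finally have cA: "card A \<le> card (fst ` F) + (card (snd ` F) - 1)" .
  have "card (snd ` F) > 0" using j0 finF by (subst card_gt_0_iff) auto
  then have "card A < card F" using cA h1 h2 by linarith
  from lin_sys[OF finF finA this] obtain g where
    g: "\<forall>e. e \<notin> F \<longrightarrow> g e = 0" "\<exists>e\<in>F. g e \<noteq> 0" "\<forall>a\<in>A. (\<Sum>e\<in>F. a e * g e) = 0"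
    by blast
  have rz: "(\<Sum>j\<in>J. g (i,j)) = 0" if "i \<in> I" for i
  proof (cases "i \<in> fst ` F")
    case True
    then have "rowf i \<in> A" by (simp add: A_def)
    then show ?thesis using g(3) row_conv[OF fin FIJ g(1) that] by (simp add: rowf_def)
  next
    case False
    then have "(\<Sum>e\<in>F. (if fst e = i then 1 else 0) * g e) = 0"
      by (intro sum.neutral) force
    then show ?thesis using row_conv[OF fin FIJ g(1) that] by simp
  qed
  have cz: "(\<Sum>i\<in>I. g (i,j)) = 0" if "j \<in> J" "j \<noteq> j0" for j
  proof (cases "j \<in> snd ` F")
    case True
    then have "colf j \<in> A" using that by (simp add: A_def)
    then show ?thesis using g(3) col_conv[OF fin FIJ g(1) that(1)] by (simp add: colf_def)
  next
    case False
    then have "(\<Sum>e\<in>F. (if snd e = j then 1 else 0) * g e) = 0"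
      by (intro sum.neutral) force
    then show ?thesis using col_conv[OF fin FIJ g(1) that(1)] by simp
  qed
  have j0J: "j0 \<in> J" using j0 FIJ by auto
  have "(\<Sum>j\<in>J. \<Sum>i\<in>I. g (i,j)) = (\<Sum>i\<in>I. \<Sum>j\<in>J. g (i,j))" by (rule sum.swap)
  also have "\<dots> = 0" using rz by simp
  finally have tot: "(\<Sum>j\<in>J. \<Sum>i\<in>I. g (i,j)) = 0" .
  have "(\<Sum>j\<in>J. \<Sum>i\<in>I. g (i,j)) = (\<Sum>i\<in>I. g (i,j0)) + (\<Sum>j\<in>J - {j0}. \<Sum>i\<in>I. g (i,j))"
    using fin j0J by (simp add: sum.remove)
  also have "(\<Sum>j\<in>J - {j0}. \<Sum>i\<in>I. g (i,j)) = 0" using cz by (intro sum.neutral) auto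
  finally have "(\<Sum>i\<in>I. g (i,j0)) = 0" using tot by simp
  then have c1: "\<forall>j\<in>J. (\<Sum>i\<in>I. g (i,j)) = 0" using cz by metis
  have r1: "\<forall>i\<in>I. (\<Sum>j\<in>J. g (i,j)) = 0" using rz by blast
  show ?thesis
    apply (rule exI[of _ g])
    using g(1,2) r1 c1 by blast
qed

lemma rounding:
  fixes M :: "'i \<times> 'j \<Rightarrow> real" and w :: "'i \<times> 'j \<Rightarrow> real"
  assumes fin: "finite I" "finite J"
    and rows: "\<forall>i\<in>I. (\<Sum>j\<in>J. M (i,j)) \<in> \<int>"
    and cols: "\<forall>j\<in>J. (\<Sum>i\<in>I. M (i,j)) \<in> \<int>"
  shows "\<exists>M'::'i \<times> 'j \<Rightarrow> real. (\<forall>e\<in>I\<times>J. M' e \<in> \<int> \<and> of_int \<lfloor>M e\<rfloor> \<le> M' e \<and> M' e \<le> of_int \<lceil>M e\<rceil>) \<and>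
     (\<forall>i\<in>I. (\<Sum>j\<in>J. M' (i,j)) = (\<Sum>j\<in>J. M (i,j))) \<and>
     (\<forall>j\<in>J. (\<Sum>i\<in>I. M' (i,j)) = (\<Sum>i\<in>I. M (i,j))) \<and>
     (\<Sum>e\<in>I\<times>J. w e * M' e) \<le> (\<Sum>e\<in>I\<times>J. w e * M e)"
  using rows cols
proof (induction "card {e \<in> I \<times> J. M e \<notin> \<int>}" arbitrary: M rule: less_induct)
  case less
  define F where "F = {e \<in> I \<times> J. M e \<notin> \<int>}"
  have finF: "finite F" using fin unfolding F_def by (auto intro: finite_subset)
  show ?case
  proof (cases "F = {}")
    case True
    show ?thesis
      by (intro exI[of _ M]) (use True in \<open>auto simp: F_def\<close>)
  next
    case False
    from kernel[OF fin less.prems F_def False] obtain g :: "'i\<times>'j\<Rightarrow>real" where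
      g: "\<forall>e. e \<notin> F \<longrightarrow> g e = 0" "\<exists>e\<in>F. g e \<noteq> 0"
         "\<forall>i\<in>I. (\<Sum>j\<in>J. g (i,j)) = 0" "\<forall>j\<in>J. (\<Sum>i\<in>I. g (i,j)) = 0"
      by blast
    define g2 where "g2 = (if (\<Sum>e\<in>I\<times>J. w e * g e) \<le> 0 then g else (\<lambda>e. - g e))"
    have g2: "\<forall>e. e \<notin> F \<longrightarrow> g2 e = 0" "\<exists>e\<in>F. g2 e \<noteq> 0"
         "\<forall>i\<in>I. (\<Sum>j\<in>J. g2 (i,j)) = 0" "\<forall>j\<in>J. (\<Sum>i\<in>I. g2 (i,j)) = 0"
      using g by (auto simp: g2_def sum_negf)
    have g2w: "(\<Sum>e\<in>I\<times>J. w e * g2 e) \<le> 0"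
      by (auto simp: g2_def sum_negf)
    define G where "G = {e\<in>F. g2 e \<noteq> 0}"
    have finG: "finite G" using finF by (simp add: G_def)
    have Gne: "G \<noteq> {}" using g2(2) by (auto simp: G_def)
    define \<tau> where "\<tau> = (\<lambda>e. if g2 e > 0 then (of_int \<lceil>M e\<rceil> - M e) / g2 e
                             else (M e - of_int \<lfloor>M e\<rfloor>) / (- g2 e))"
    have fl: "of_int \<lfloor>M e\<rfloor> < M e" "M e < of_int \<lceil>M e\<rceil>" if "e \<in> F" for e
    proof -
      have "M e \<notin> \<int>" using that by (simp add: F_def)
      then show "of_int \<lfloor>M e\<rfloor> < M e" "M e < of_int \<lceil>M e\<rceil>"
        by (metis Ints_of_int floor_correct order_le_less,
            metis Ints_of_int le_of_int_ceiling order_le_less)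
    qed
    have taupos: "\<tau> e > 0" if "e \<in> G" for e
      using that fl[of e] by (auto simp: \<tau>_def G_def divide_pos_neg)
    define t where "t = Min (\<tau> ` G)"
    have tin: "t \<in> \<tau> ` G" unfolding t_def using finG Gne by (intro Min_in) auto
    then obtain es where es: "es \<in> G" "\<tau> es = t" by auto
    have tpos: "t > 0" using es taupos[OF es(1)] by simp
    have tle: "t \<le> \<tau> e" if "e \<in> G" for e unfolding t_def using finG that by (intro Min_le) auto
    define M2 where "M2 = (\<lambda>e. M e + t * g2 e)"
    have bnd: "of_int \<lfloor>M e\<rfloor> \<le> M2 e \<and> M2 e \<le> of_int \<lceil>M e\<rceil>" for e
    proof (cases "g2 e = 0")
      case True
      then show ?thesis by (simp add: M2_def)
    next
      case False
      then have eG: "e \<in> G" using g2(1) unfolding G_def by blast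
      have te: "t \<le> \<tau> e" using tle eG .
      have eF: "e \<in> F" using eG by (simp add: G_def)
      show ?thesis
      proof (cases "g2 e > 0")
        case True
        then have "t * g2 e \<le> of_int \<lceil>M e\<rceil> - M e"
          using te by (simp add: \<tau>_def pos_le_divide_eq)
        moreover have "t * g2 e \<ge> 0" using True tpos by simp
        ultimately show ?thesis using fl[OF eF] by (simp add: M2_def)
      next
        case neg: False
        then have ng: "- g2 e > 0" using False by simp
        have tv: "\<tau> e * (- g2 e) = M e - of_int \<lfloor>M e\<rfloor>"
          using ng neg by (simp add: \<tau>_def)
        have "t * (- g2 e) \<le> \<tau> e * (- g2 e)"
          using te ng by (intro mult_right_mono) auto
        then have "t * (- g2 e) \<le> M e - of_int \<lfloor>M e\<rfloor>" using tv by simp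
        moreover have "t * (- g2 e) \<ge> 0" using ng tpos by (intro mult_nonneg_nonneg) auto
        ultimately show ?thesis using fl[OF eF] by (simp add: M2_def algebra_simps)
      qed
    qed
    have esint: "M2 es \<in> \<int>"
    proof (cases "g2 es > 0")
      case True
      then have "M2 es = of_int \<lceil>M es\<rceil>" using es(2)[symmetric] by (simp add: M2_def \<tau>_def field_simps)
      then show ?thesis by simp
    next
      case False
      then have "g2 es \<noteq> 0" using es by (simp add: G_def)
      then have "M2 es = of_int \<lfloor>M es\<rfloor>" using es(2)[symmetric] False by (simp add: M2_def \<tau>_def field_simps)
      then show ?thesis by simp
    qed
    have sub: "{e \<in> I \<times> J. M2 e \<notin> \<int>} \<subseteq> F - {es}"
    proof
      fix e assume e: "e \<in> {e \<in> I \<times> J. M2 e \<notin> \<int>}"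
      show "e \<in> F - {es}"
      proof (cases "e \<in> F")
        case True then show ?thesis using e esint by auto
      next
        case False
        then have "M2 e = M e" using g2(1)[rule_format, of e] by (simp add: M2_def)
        then show ?thesis using e False by (auto simp: F_def)
      qed
    qed
    have esF: "es \<in> F" using es by (simp add: G_def)
    have lt: "card {e \<in> I \<times> J. M2 e \<notin> \<int>} < card {e \<in> I \<times> J. M e \<notin> \<int>}"
      unfolding F_def[symmetric]
    proof -
      have "card {e \<in> I \<times> J. M2 e \<notin> \<int>} \<le> card (F - {es})"
        using finF sub by (intro card_mono) auto
      also have "\<dots> < card F" using card_Diff1_less[OF finF esF] .
      finally show "card {e \<in> I \<times> J. M2 e \<notin> \<int>} < card F" .
    qed
    have rowsum: "(\<Sum>j\<in>J. M2 (i,j)) = (\<Sum>j\<in>J. M (i,j))" if "i \<in> I" for i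
      using g2(3) that by (simp add: M2_def sum.distrib sum_distrib_left[symmetric])
    have colsum: "(\<Sum>i\<in>I. M2 (i,j)) = (\<Sum>i\<in>I. M (i,j))" if "j \<in> J" for j
      using g2(4) that by (simp add: M2_def sum.distrib sum_distrib_left[symmetric])
    have cost: "(\<Sum>e\<in>I\<times>J. w e * M2 e) \<le> (\<Sum>e\<in>I\<times>J. w e * M e)"
    proof -
      have "(\<Sum>e\<in>I\<times>J. w e * M2 e) = (\<Sum>e\<in>I\<times>J. w e * M e) + t * (\<Sum>e\<in>I\<times>J. w e * g2 e)"
        by (simp add: M2_def algebra_simps sum.distrib sum_distrib_left)
      moreover have "t * (\<Sum>e\<in>I\<times>J. w e * g2 e) \<le> 0"
        using tpos g2w by (simp add: mult_nonneg_nonpos)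
      ultimately show ?thesis by simp
    qed
    have r2: "\<forall>i\<in>I. (\<Sum>j\<in>J. M2 (i,j)) \<in> \<int>" using rowsum less.prems(1) by simp
    have c2: "\<forall>j\<in>J. (\<Sum>i\<in>I. M2 (i,j)) \<in> \<int>" using colsum less.prems(2) by simp
    from less.hyps[OF lt r2 c2] obtain M' where
      M': "\<forall>e\<in>I\<times>J. M' e \<in> \<int> \<and> of_int \<lfloor>M2 e\<rfloor> \<le> M' e \<and> M' e \<le> of_int \<lceil>M2 e\<rceil>"
       "\<forall>i\<in>I. (\<Sum>j\<in>J. M' (i,j)) = (\<Sum>j\<in>J. M2 (i,j))"
       "\<forall>j\<in>J. (\<Sum>i\<in>I. M' (i,j)) = (\<Sum>i\<in>I. M2 (i,j))"
       "(\<Sum>e\<in>I\<times>J. w e * M' e) \<le> (\<Sum>e\<in>I\<times>J. w e * M2 e)"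
      by blast
    show ?thesis
    proof (intro exI[of _ M'] conjI ballI)
      fix e assume e: "e \<in> I \<times> J"
      have "\<lfloor>M e\<rfloor> \<le> \<lfloor>M2 e\<rfloor>" using bnd[of e] by (simp add: le_floor_iff)
      then have "(of_int \<lfloor>M e\<rfloor> :: real) \<le> of_int \<lfloor>M2 e\<rfloor>" by simp
      then show "of_int \<lfloor>M e\<rfloor> \<le> M' e" using M'(1) e by (meson order_trans)
      have "\<lceil>M2 e\<rceil> \<le> \<lceil>M e\<rceil>" using bnd[of e] by (simp add: ceiling_le_iff)
      then have "(of_int \<lceil>M2 e\<rceil> :: real) \<le> of_int \<lceil>M e\<rceil>" by simp
      then show "M' e \<le> of_int \<lceil>M e\<rceil>" using M'(1) e by (meson order_trans)
      show "M' e \<in> \<int>" using M'(1) e by blast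
    next
      fix i assume "i \<in> I" then show "(\<Sum>j\<in>J. M' (i,j)) = (\<Sum>j\<in>J. M (i,j))"
        using M'(2) rowsum by simp
    next
      fix j assume "j \<in> J" then show "(\<Sum>i\<in>I. M' (i,j)) = (\<Sum>i\<in>I. M (i,j))"
        using M'(3) colsum by simp
    next
      show "(\<Sum>e\<in>I\<times>J. w e * M' e) \<le> (\<Sum>e\<in>I\<times>J. w e * M e)" using M'(4) cost by simp
    qed
  qed
qed

lemma sum_nth_mset: "(\<Sum>i<length zs. f (zs!i)) = sum_mset (image_mset f (mset zs))"
proof -
  have "sum_mset (image_mset f (mset zs)) = sum_list (map f zs)"
    by (simp add: sum_mset_sum_list[symmetric])
  also have "\<dots> = (\<Sum>i = 0..<length zs. f (zs!i))" by (simp add: sum_list_sum_nth)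
  finally show ?thesis by (simp add: atLeast0LessThan)
qed

lemma psum_zip:
  "length xs = length ys \<Longrightarrow>
   (\<Sum>i<length xs. d (xs!i) (ys!i)) = sum_mset (image_mset (\<lambda>(a,b). d a b) (mset (zip xs ys)))"
  using sum_nth_mset[of "\<lambda>(a,b). d a b" "zip xs ys"] by simp

lemma psum_zip_swap:
  "length xs = length ys \<Longrightarrow>
   (\<Sum>i<length xs. d (xs!i) (ys!i)) = sum_mset (image_mset (\<lambda>(b,a). d a b) (mset (zip ys xs)))"
  using sum_nth_mset[of "\<lambda>(b,a). d a b" "zip ys xs"] by simp

lemma finite_mset_lists: "finite {xs. mset xs = U}"
proof -
  have "{xs. mset xs = U} \<subseteq> {xs. set xs \<subseteq> set_mset U \<and> length xs = size U}" by auto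
  then show ?thesis by (rule finite_subset) (simp add: finite_lists_length_eq)
qed

lemma dkset_eq: "{(\<Sum>i<length xs. d (xs ! i) (ys ! i)) | xs ys. mset xs = U \<and> mset ys = V}
  = (\<lambda>(xs,ys). (\<Sum>i<length xs. d (xs ! i) (ys ! i))) ` ({xs. mset xs = U} \<times> {ys. mset ys = V})"
  by auto

lemma dk_le: "mset xs = U \<Longrightarrow> mset ys = V \<Longrightarrow> dk d U V \<le> (\<Sum>i<length xs. d (xs!i) (ys!i))"
  unfolding dk_def dkset_eq
  by (rule Min_le) (auto simp: finite_mset_lists)

lemma dk_attained:
  assumes "size U = size V"
  shows "\<exists>xs ys. mset xs = U \<and> mset ys = V \<and> dk d U V = (\<Sum>i<length xs. d (xs!i) (ys!i))"
proof -
  obtain xs ys where "mset xs = U" "mset ys = V" using ex_mset by metis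
  then have ne: "({xs. mset xs = U} \<times> {ys. mset ys = V}) \<noteq> {}" by auto
  have "dk d U V \<in> (\<lambda>(xs,ys). (\<Sum>i<length xs. d (xs ! i) (ys ! i))) ` ({xs. mset xs = U} \<times> {ys. mset ys = V})"
    unfolding dk_def dkset_eq using ne by (intro Min_in) (auto simp: finite_mset_lists)
  then show ?thesis by auto
qed

lemma dk_right:
  assumes "size U = size V" "mset ys = V"
  shows "\<exists>xs. mset xs = U \<and> length xs = length ys \<and> dk d U V = (\<Sum>i<length xs. d (xs!i) (ys!i))"
proof -
  obtain xs0 ys0 where o: "mset xs0 = U" "mset ys0 = V" "dk d U V = (\<Sum>i<length xs0. d (xs0!i) (ys0!i))"
    using dk_attained[OF assms(1)] by blast
  have len0: "length ys0 = length xs0" using o assms(1) by (metis size_mset)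
  have "mset ys = mset ys0" using o assms by simp
  from ex_mset_zip_left[OF len0 this] obtain xs' where
    xs': "length xs' = length ys" "mset (zip ys xs') = mset (zip ys0 xs0)" by blast
  have "mset xs' = image_mset snd (mset (zip ys xs'))" using xs'(1) by (metis map_snd_zip mset_map)
  also have "\<dots> = image_mset snd (mset (zip ys0 xs0))" using xs'(2) by simp
  also have "\<dots> = U" using len0 o(1) by (metis map_snd_zip mset_map)
  finally have m: "mset xs' = U" .
  have "dk d U V = sum_mset (image_mset (\<lambda>(b,a). d a b) (mset (zip ys0 xs0)))"
    using o(3) psum_zip_swap[of xs0 ys0 d] len0 by simp
  also have "\<dots> = (\<Sum>i<length xs'. d (xs'!i) (ys!i))"
    using psum_zip_swap[of xs' ys d] xs' by simp
  finally show ?thesis using m xs'(1) by blast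
qed

lemma fms_props:
  assumes "finite_metric_space X d"
  shows "finite X" "\<And>x y. x \<in> X \<Longrightarrow> y \<in> X \<Longrightarrow> d x y \<ge> 0"
    "\<And>x y. x \<in> X \<Longrightarrow> y \<in> X \<Longrightarrow> d x y = d y x"
    "\<And>x y z. x \<in> X \<Longrightarrow> y \<in> X \<Longrightarrow> z \<in> X \<Longrightarrow> d x z \<le> d x y + d y z"
  using assms unfolding finite_metric_space_def by auto

lemma dk_nonneg:
  assumes "finite_metric_space X d" "set_mset U \<subseteq> X" "set_mset V \<subseteq> X" "size U = size V"
  shows "dk d U V \<ge> 0"
proof -
  obtain xs ys where o: "mset xs = U" "mset ys = V" "dk d U V = (\<Sum>i<length xs. d (xs!i) (ys!i))"
    using dk_attained[OF assms(4)] by blast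
  have len: "length xs = length ys" using o assms(4) by (metis size_mset)
  have "d (xs!i) (ys!i) \<ge> 0" if "i < length xs" for i
  proof -
    have "xs!i \<in> X" using that o assms(2) by (metis in_mono nth_mem set_mset_mset)
    moreover have "ys!i \<in> X" using that len o assms(3) by (metis in_mono nth_mem set_mset_mset)
    ultimately show ?thesis using fms_props(2)[OF assms(1)] by blast
  qed
  then show ?thesis unfolding o(3) by (intro sum_nonneg) auto
qed

lemma dk_tri:
  assumes "finite_metric_space X d" "set_mset U \<subseteq> X" "set_mset V \<subseteq> X" "set_mset W \<subseteq> X"
    "size U = size V" "size V = size W"
  shows "dk d U W \<le> dk d U V + dk d V W"
proof -
  obtain ys zs where o: "mset ys = V" "mset zs = W" "dk d V W = (\<Sum>i<length ys. d (ys!i) (zs!i))"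
    using dk_attained[OF assms(6)] by blast
  obtain xs where x: "mset xs = U" "length xs = length ys" "dk d U V = (\<Sum>i<length xs. d (xs!i) (ys!i))"
    using dk_right[OF assms(5) o(1)] by blast
  have lz: "length zs = length ys" using o assms(6) by (metis size_mset)
  have "dk d U W \<le> (\<Sum>i<length xs. d (xs!i) (zs!i))" using dk_le x(1) o(2) by blast
  also have "\<dots> \<le> (\<Sum>i<length xs. d (xs!i) (ys!i) + d (ys!i) (zs!i))"
  proof (rule sum_mono)
    fix i assume "i \<in> {..<length xs}"
    then have i: "i < length xs" by simp
    have "xs!i \<in> X" using i x assms(2) by (metis in_mono nth_mem set_mset_mset)
    moreover have "ys!i \<in> X" using i x o assms(3) by (metis in_mono nth_mem set_mset_mset)
    moreover have "zs!i \<in> X" using i x lz o assms(4) by (metis in_mono nth_mem set_mset_mset)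
    ultimately show "d (xs!i) (zs!i) \<le> d (xs!i) (ys!i) + d (ys!i) (zs!i)"
      using fms_props(4)[OF assms(1)] by blast
  qed
  also have "\<dots> = dk d U V + dk d V W" using x o by (simp add: sum.distrib)
  finally show ?thesis .
qed

lemma sum_L_prod:
  fixes P :: "'a \<Rightarrow> real"
  assumes "finite X"
  shows "(\<Sum>xs\<in>{xs. set xs \<subseteq> X \<and> length xs = n}. prod_list (map P xs)) = (\<Sum>x\<in>X. P x) ^ n"
proof (induction n)
  case 0
  have "{xs. set xs \<subseteq> X \<and> length xs = 0} = {[]}" by auto
  then show ?case by simp
next
  case (Suc n)
  let ?L = "{xs. set xs \<subseteq> X \<and> length xs = n}"
  have inj: "inj_on (\<lambda>(xs, n). n#xs) (?L \<times> X)" by (auto intro: inj_onI)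
  have "(\<Sum>xs\<in>{xs. set xs \<subseteq> X \<and> length xs = Suc n}. prod_list (map P xs))
      = (\<Sum>p\<in>?L \<times> X. prod_list (map P ((\<lambda>(xs, n). n#xs) p)))"
    unfolding lists_length_Suc_eq by (subst sum.reindex[OF inj]) (simp add: comp_def)
  also have "\<dots> = (\<Sum>xs\<in>?L. \<Sum>a\<in>X. P a * prod_list (map P xs))"
    by (simp add: sum.cartesian_product case_prod_unfold)
  also have "\<dots> = (\<Sum>xs\<in>?L. prod_list (map P xs)) * (\<Sum>a\<in>X. P a)"
    by (subst sum_product) (simp add: mult.commute)
  finally show ?case using Suc by simp
qed

lemma sum_L_count:
  assumes "finite X" "(\<Sum>x\<in>X. P x) = 1" "x \<in> X"
  shows "(\<Sum>xs\<in>{xs. set xs \<subseteq> X \<and> length xs = n}. prod_list (map P xs) * real (count (mset xs) x))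
         = real n * P x"
proof (induction n)
  case 0
  have "{xs. set xs \<subseteq> X \<and> length xs = 0} = {[]}" by auto
  then show ?case by simp
next
  case (Suc n)
  let ?L = "{xs. set xs \<subseteq> X \<and> length xs = n}"
  have inj: "inj_on (\<lambda>(xs, n). n#xs) (?L \<times> X)" by (auto intro: inj_onI)
  have "(\<Sum>xs\<in>{xs. set xs \<subseteq> X \<and> length xs = Suc n}. prod_list (map P xs) * real (count (mset xs) x))
      = (\<Sum>p\<in>?L \<times> X. (\<lambda>xs. prod_list (map P xs) * real (count (mset xs) x)) ((\<lambda>(xs, n). n#xs) p))"
    unfolding lists_length_Suc_eq by (subst sum.reindex[OF inj]) (simp add: comp_def)
  also have "\<dots> = (\<Sum>xs\<in>?L. \<Sum>a\<in>X. P a * prod_list (map P xs) * (real (count (mset xs) x) + (if a = x then 1 else 0)))"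
    apply (simp add: sum.cartesian_product case_prod_unfold)
    by (intro sum.cong) auto
  also have "\<dots> = (\<Sum>xs\<in>?L. \<Sum>a\<in>X. P a * (prod_list (map P xs) * real (count (mset xs) x))
                    + (if a = x then P x * prod_list (map P xs) else 0))"
    by (intro sum.cong refl) (auto simp: algebra_simps)
  also have "\<dots> = (\<Sum>xs\<in>?L. prod_list (map P xs) * real (count (mset xs) x)) * (\<Sum>a\<in>X. P a)
                  + P x * (\<Sum>xs\<in>?L. prod_list (map P xs))"
    using assms(1,3) by (simp add: sum.distrib sum_distrib_left sum_distrib_right[symmetric] sum.delta' mult.commute)
  also have "\<dots> = real n * P x + P x" using Suc assms sum_L_prod[OF assms(1), of P n] by simp
  finally show ?case by (simp add: algebra_simps)
qed

lemma count_sum_rep: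
  assumes "finite X"
  shows "count (\<Sum>x\<in>X. replicate_mset (f x) x) y = (if y \<in> X then f y else 0)"
  using assms by (simp add: count_sum sum.delta')

lemma cnt_fst:
  assumes "set_mset Pi \<subseteq> A \<times> B" "finite B"
  shows "(\<Sum>x\<in>B. count Pi (y,x)) = count (image_mset fst Pi) y"
  using assms(1)
proof (induction Pi)
  case empty
  then show ?case by simp
next
  case (add e Pi)
  obtain a b where e: "e = (a,b)" by (cases e)
  have bB: "b \<in> B" using add.prems e by auto
  have "(\<Sum>x\<in>B. count (add_mset e Pi) (y,x)) = (\<Sum>x\<in>B. count Pi (y,x) + (if x = b \<and> y = a then 1 else 0))"
    by (intro sum.cong) (auto simp: e)
  also have "\<dots> = (\<Sum>x\<in>B. count Pi (y,x)) + (if y = a then 1 else 0)"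
    using assms(2) bB by (simp add: sum.distrib sum.delta' conj_commute cong: conj_cong)
  also have "(\<Sum>x\<in>B. count Pi (y,x)) = count (image_mset fst Pi) y" using add by auto
  finally show ?case by (simp add: e)
qed

lemma cnt_snd:
  assumes "set_mset Pi \<subseteq> A \<times> B" "finite A"
  shows "(\<Sum>y\<in>A. count Pi (y,x)) = count (image_mset snd Pi) x"
  using assms(1)
proof (induction Pi)
  case empty
  then show ?case by simp
next
  case (add e Pi)
  obtain a b where e: "e = (a,b)" by (cases e)
  have aA: "a \<in> A" using add.prems e by auto
  have "(\<Sum>y\<in>A. count (add_mset e Pi) (y,x)) = (\<Sum>y\<in>A. count Pi (y,x) + (if y = a \<and> x = b then 1 else 0))"
    by (intro sum.cong) (auto simp: e)
  also have "\<dots> = (\<Sum>y\<in>A. count Pi (y,x)) + (if x = b then 1 else 0)"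
    using assms(2) aA by (simp add: sum.distrib sum.delta')
  also have "(\<Sum>y\<in>A. count Pi (y,x)) = count (image_mset snd Pi) x" using add by auto
  finally show ?case by (simp add: e)
qed

lemma cnt_cost:
  assumes "set_mset Pi \<subseteq> S" "finite S"
  shows "(\<Sum>e\<in>S. real (count Pi e) * h e) = sum_mset (image_mset h Pi)"
  using assms(1)
proof (induction Pi)
  case empty
  then show ?case by simp
next
  case (add e Pi)
  have eS: "e \<in> S" using add.prems by auto
  have "(\<Sum>e'\<in>S. real (count (add_mset e Pi) e') * h e') = (\<Sum>e'\<in>S. real (count Pi e') * h e' + (if e' = e then h e else 0))"
    by (intro sum.cong) (auto simp: algebra_simps)
  also have "\<dots> = (\<Sum>e'\<in>S. real (count Pi e') * h e') + h e"
    using assms(2) eS by (simp add: sum.distrib sum.delta')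
  finally show ?case using add by simp
qed

lemma sum_opt:
  assumes "finite X"
  shows "(\<Sum>i\<in>insert None (Some ` X). f i) = f None + (\<Sum>y\<in>X. f (Some y))"
  using assms by (simp add: sum.reindex)

lemma sum_optX:
  assumes "finite X"
  shows "(\<Sum>e\<in>insert None (Some ` X) \<times> X. f e) = (\<Sum>x\<in>X. f (None, x)) + (\<Sum>e\<in>X \<times> X. f (Some (fst e), snd e))"
proof -
  have "(\<Sum>e\<in>insert None (Some ` X) \<times> X. f e) = (\<Sum>i\<in>insert None (Some ` X). \<Sum>x\<in>X. f (i,x))"
    by (simp add: sum.cartesian_product)
  also have "\<dots> = (\<Sum>x\<in>X. f (None, x)) + (\<Sum>y\<in>X. \<Sum>x\<in>X. f (Some y, x))"
    using sum_opt[OF assms] by simp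
  also have "(\<Sum>y\<in>X. \<Sum>x\<in>X. f (Some y, x)) = (\<Sum>e\<in>X \<times> X. f (Some (fst e), snd e))"
    by (simp add: sum.cartesian_product case_prod_unfold)
  finally show ?thesis .
qed

lemma prod_list_pos: "(\<And>y. y \<in> set ys \<Longrightarrow> (f y::real) > 0) \<Longrightarrow> prod_list (map f ys) > 0"
  by (induction ys) auto

theorem corollary2:
  fixes X :: "'a set" and d :: "'a \<Rightarrow> 'a \<Rightarrow> real" and P :: "'a \<Rightarrow> real"
    and k :: nat and Opt :: "'a multiset"
  assumes "finite_metric_space X d"
    and "prob_dist X P"
    and "k \<ge> 1"
    and "Opt \<in> kmsets X k"
    and "\<forall>S\<in>kmsets X k. krp_cost X d P k Opt \<le> krp_cost X d P k S"
  shows "\<exists>S\<in>kmsets X k. ptilde_prob X P k S > 0 \<and>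
           krp_cost X d P k S \<le> 4 * krp_cost X d P k Opt"
proof -
  note fms = assms(1)
  have finX: "finite X" using fms_props(1)[OF fms] .
  have Pnn: "\<And>x. x \<in> X \<Longrightarrow> P x \<ge> 0" and Psum: "(\<Sum>x\<in>X. P x) = 1"
    using assms(2) unfolding prob_dist_def by auto
  have kpos: "real k > 0" using assms(3) by simp
  have sizeO: "size Opt = k" and setO: "set_mset Opt \<subseteq> X"
    using assms(4) unfolding kmsets_def by auto
  define L where "L = {xs. set xs \<subseteq> X \<and> length xs = k}"
  define p where "p = (\<lambda>xs. prod_list (map P xs))"
  have finL: "finite L" unfolding L_def using finX by (rule finite_lists_length_eq)
  have pnn: "p xs \<ge> 0" if "xs \<in> L" for xs
    using that Pnn unfolding p_def L_def by (intro prod_list_nonneg) auto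
  have psum: "(\<Sum>xs\<in>L. p xs) = 1"
    unfolding L_def p_def using sum_L_prod[OF finX, of P k] Psum by simp
  have costO: "krp_cost X d P k Opt = (\<Sum>xs\<in>L. p xs * dk d Opt (mset xs))"
    unfolding krp_cost_def L_def p_def by simp
  have "\<forall>xs\<in>L. \<exists>os. mset os = Opt \<and> length os = length xs \<and>
          dk d Opt (mset xs) = (\<Sum>i<length os. d (os!i) (xs!i))"
  proof
    fix xs assume "xs \<in> L"
    then have "size Opt = size (mset xs)" using sizeO by (simp add: L_def)
    then show "\<exists>os. mset os = Opt \<and> length os = length xs \<and>
          dk d Opt (mset xs) = (\<Sum>i<length os. d (os!i) (xs!i))"
      using dk_right[of Opt "mset xs" xs d] by simp
  qed
  then obtain ox where ox: "\<And>xs. xs \<in> L \<Longrightarrow> mset (ox xs) = Opt \<and> length (ox xs) = length xs \<and>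
          dk d Opt (mset xs) = (\<Sum>i<length (ox xs). d (ox xs!i) (xs!i))"
    by metis
  define Pi where "Pi = (\<lambda>xs. mset (zip (ox xs) xs))"
  have Pi_fst: "image_mset fst (Pi xs) = Opt" if "xs \<in> L" for xs
    using ox[OF that] unfolding Pi_def by (metis map_fst_zip mset_map)
  have Pi_snd: "image_mset snd (Pi xs) = mset xs" if "xs \<in> L" for xs
    using ox[OF that] unfolding Pi_def by (metis map_snd_zip mset_map)
  have Pi_set: "set_mset (Pi xs) \<subseteq> X \<times> X" if "xs \<in> L" for xs
  proof -
    have "set (ox xs) \<subseteq> X" using ox[OF that] setO by (metis set_mset_mset)
    moreover have "set xs \<subseteq> X" using that by (simp add: L_def)
    ultimately show ?thesis unfolding Pi_def by (auto dest: set_zip_leftD set_zip_rightD)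
  qed
  have Pi_cost: "dk d Opt (mset xs) = sum_mset (image_mset (\<lambda>(a,b). d a b) (Pi xs))" if "xs \<in> L" for xs
    using ox[OF that] psum_zip[of "ox xs" xs d] unfolding Pi_def by simp
  define T where "T = (\<lambda>e. \<Sum>xs\<in>L. p xs * real (count (Pi xs) e))"
  have Tnn: "T e \<ge> 0" for e unfolding T_def using pnn by (intro sum_nonneg) auto
  have Trow: "(\<Sum>x\<in>X. T (y,x)) = real (count Opt y)" for y
  proof -
    have "(\<Sum>x\<in>X. T (y,x)) = (\<Sum>xs\<in>L. p xs * real (\<Sum>x\<in>X. count (Pi xs) (y,x)))"
      unfolding T_def by (subst sum.swap) (simp add: sum_distrib_left)
    also have "\<dots> = (\<Sum>xs\<in>L. p xs * real (count Opt y))"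
      by (intro sum.cong refl) (simp add: cnt_fst[OF Pi_set finX] Pi_fst)
    also have "\<dots> = real (count Opt y)" using psum by (simp add: sum_distrib_right[symmetric])
    finally show ?thesis .
  qed
  have Tcol: "(\<Sum>y\<in>X. T (y,x)) = real k * P x" if "x \<in> X" for x
  proof -
    have "(\<Sum>y\<in>X. T (y,x)) = (\<Sum>xs\<in>L. p xs * real (\<Sum>y\<in>X. count (Pi xs) (y,x)))"
      unfolding T_def by (subst sum.swap) (simp add: sum_distrib_left)
    also have "\<dots> = (\<Sum>xs\<in>L. p xs * real (count (mset xs) x))"
      by (intro sum.cong refl) (simp add: cnt_snd[OF Pi_set finX] Pi_snd)
    also have "\<dots> = real k * P x"
      unfolding L_def p_def using sum_L_count[OF finX Psum that] by simp
    finally show ?thesis .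
  qed
  have Tcost: "(\<Sum>e\<in>X \<times> X. (\<lambda>(a,b). d a b) e * T e) = krp_cost X d P k Opt"
  proof -
    have "(\<Sum>e\<in>X \<times> X. (\<lambda>(a,b). d a b) e * T e)
        = (\<Sum>xs\<in>L. p xs * (\<Sum>e\<in>X \<times> X. real (count (Pi xs) e) * (\<lambda>(a,b). d a b) e))"
      unfolding T_def sum_distrib_left by (subst sum.swap) (simp add: mult_ac)
    also have "\<dots> = (\<Sum>xs\<in>L. p xs * dk d Opt (mset xs))"
      using finX by (intro sum.cong refl) (simp add: cnt_cost[OF Pi_set] Pi_cost)
    finally show ?thesis using costO by simp
  qed

  define c where "c = (\<lambda>x. P x * real k)"
  have cnn: "c x \<ge> 0" if "x \<in> X" for x using Pnn[OF that] by (simp add: c_def)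
  have csum: "(\<Sum>x\<in>X. c x) = real k" unfolding c_def using Psum by (simp add: sum_distrib_right[symmetric])
  define I where "I = insert None (Some ` X)"
  have finI: "finite I" using finX by (simp add: I_def)
  define M where "M = (\<lambda>(i,x). case i of None \<Rightarrow> of_int \<lceil>c x\<rceil> - c x | Some y \<Rightarrow> T (y,x))"
  define w where "w = (\<lambda>(i,x). case i of None \<Rightarrow> 0 | Some y \<Rightarrow> d y x)"
  have rowsM: "\<forall>i\<in>I. (\<Sum>x\<in>X. M (i,x)) \<in> \<int>"
  proof
    fix i assume "i \<in> I"
    show "(\<Sum>x\<in>X. M (i,x)) \<in> \<int>"
    proof (cases i)
      case None
      have e: "(\<Sum>x\<in>X. M (i,x)) = (\<Sum>x\<in>X. real_of_int \<lceil>c x\<rceil>) - real k"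
        using None csum by (simp add: M_def sum_subtractf)
      have "(\<Sum>x\<in>X. real_of_int \<lceil>c x\<rceil>) \<in> \<int>" by (intro Ints_sum) auto
      moreover have "real k \<in> \<int>" by (rule Ints_of_nat)
      ultimately show ?thesis unfolding e by (rule Ints_diff)
    next
      case (Some y)
      then show ?thesis using Trow[of y] by (simp add: M_def)
    qed
  qed
  have colsM_eq: "(\<Sum>i\<in>I. M (i,x)) = of_int \<lceil>c x\<rceil>" if "x \<in> X" for x
    unfolding I_def using sum_opt[OF finX, of "\<lambda>i. M (i,x)"] Tcol[OF that]
    by (simp add: M_def c_def)
  have colsM: "\<forall>x\<in>X. (\<Sum>i\<in>I. M (i,x)) \<in> \<int>" using colsM_eq by simp
  from rounding[OF finI finX rowsM colsM, of w] obtain M' where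
    M': "\<forall>e\<in>I\<times>X. M' e \<in> \<int> \<and> of_int \<lfloor>M e\<rfloor> \<le> M' e \<and> M' e \<le> of_int \<lceil>M e\<rceil>"
      "\<forall>i\<in>I. (\<Sum>x\<in>X. M' (i,x)) = (\<Sum>x\<in>X. M (i,x))"
      "\<forall>x\<in>X. (\<Sum>i\<in>I. M' (i,x)) = (\<Sum>i\<in>I. M (i,x))"
      "(\<Sum>e\<in>I\<times>X. w e * M' e) \<le> (\<Sum>e\<in>I\<times>X. w e * M e)"
    by blast
  have wM: "(\<Sum>e\<in>I\<times>X. w e * M e) = krp_cost X d P k Opt"
    unfolding I_def sum_optX[OF finX] using Tcost by (simp add: w_def M_def case_prod_unfold)
  define N where "N = (\<lambda>e. nat \<lfloor>M' (Some (fst e), snd e)\<rfloor>)"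
  have N_eq: "real (N (y,x)) = M' (Some y, x)" if "y \<in> X" "x \<in> X" for y x
  proof -
    have e: "(Some y, x) \<in> I \<times> X" using that by (simp add: I_def)
    have "M (Some y, x) \<ge> 0" using Tnn by (simp add: M_def)
    then have "0 \<le> \<lfloor>M (Some y, x)\<rfloor>" by simp
    then have "(0::real) \<le> of_int \<lfloor>M (Some y, x)\<rfloor>" by simp
    moreover have "of_int \<lfloor>M (Some y, x)\<rfloor> \<le> M' (Some y, x)" using M'(1) e by blast
    ultimately have "0 \<le> M' (Some y, x)" by linarith
    moreover have "M' (Some y, x) \<in> \<int>" using M'(1) e by blast
    ultimately show ?thesis unfolding N_def by (auto elim!: Ints_cases)
  qed
  have Nrow: "(\<Sum>x\<in>X. N (y,x)) = count Opt y" if "y \<in> X" for y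
  proof -
    have "real (\<Sum>x\<in>X. N (y,x)) = (\<Sum>x\<in>X. M' (Some y, x))"
      using N_eq that by simp
    also have "\<dots> = (\<Sum>x\<in>X. M (Some y, x))" using M'(2) that by (simp add: I_def)
    also have "\<dots> = real (count Opt y)" using Trow[of y] by (simp add: M_def)
    finally show ?thesis by (simp only: of_nat_eq_iff)
  qed
  define z where "z = (\<lambda>x. \<Sum>y\<in>X. N (y,x))"
  have zcol: "M' (None, x) + real (z x) = of_int \<lceil>c x\<rceil>" if "x \<in> X" for x
  proof -
    have "M' (None, x) + real (z x) = (\<Sum>i\<in>I. M' (i,x))"
      unfolding I_def z_def using sum_opt[OF finX, of "\<lambda>i. M' (i,x)"] N_eq that by simp
    also have "\<dots> = of_int \<lceil>c x\<rceil>" using M'(3) colsM_eq that by simp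
    finally show ?thesis .
  qed
  have zb: "nat \<lfloor>c x\<rfloor> \<le> z x \<and> z x \<le> nat \<lfloor>c x\<rfloor> + 1 \<and> (c x \<in> \<int> \<longrightarrow> z x = nat \<lfloor>c x\<rfloor>)"
    if "x \<in> X" for x
  proof -
    have e: "(None, x) \<in> I \<times> X" using that by (simp add: I_def)
    have b: "of_int \<lfloor>M (None,x)\<rfloor> \<le> M' (None,x)" "M' (None,x) \<le> of_int \<lceil>M (None,x)\<rceil>"
      using M'(1) e by auto
    have fl0: "\<lfloor>c x\<rfloor> \<ge> 0" using cnn[OF that] by simp
    show ?thesis
    proof (cases "c x \<in> \<int>")
      case True
      then obtain n where n: "c x = of_int n" by (auto elim!: Ints_cases)
      then have "M (None,x) = 0" "\<lceil>c x\<rceil> = \<lfloor>c x\<rfloor>" by (simp_all add: M_def)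
      then have "M' (None,x) = 0" using b by simp
      then have "real (z x) = of_int \<lfloor>c x\<rfloor>" using zcol[OF that] \<open>\<lceil>c x\<rceil> = \<lfloor>c x\<rfloor>\<close> by simp
      then have "z x = nat \<lfloor>c x\<rfloor>" using fl0 by linarith
      then show ?thesis using True by simp
    next
      case False
      then have ne: "c x \<noteq> of_int \<lfloor>c x\<rfloor>" by (metis Ints_of_int)
      then have ce: "\<lceil>c x\<rceil> = \<lfloor>c x\<rfloor> + 1" by (simp add: ceiling_altdef)
      have lt: "of_int \<lfloor>c x\<rfloor> < c x" using ne of_int_floor_le[of "c x"] by linarith
      have "M (None,x) = of_int \<lfloor>c x\<rfloor> + 1 - c x" using ce by (simp add: M_def)
      moreover have "c x < of_int \<lfloor>c x\<rfloor> + 1" by linarith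
      ultimately have "0 < M (None,x)" "M (None,x) < 1" using lt by auto
      then have "\<lfloor>M (None,x)\<rfloor> = 0" "\<lceil>M (None,x)\<rceil> = 1"
        by (simp_all add: floor_eq_iff ceiling_eq_iff)
      then have "0 \<le> M' (None,x)" "M' (None,x) \<le> 1" using b by auto
      then have "of_int \<lfloor>c x\<rfloor> \<le> real (z x)" "real (z x) \<le> of_int \<lfloor>c x\<rfloor> + 1"
        using zcol[OF that] ce by auto
      then show ?thesis using False fl0 by linarith
    qed
  qed
  define Pi0 where "Pi0 = (\<Sum>e\<in>X \<times> X. replicate_mset (N e) e)"
  have cPi0: "count Pi0 e = (if e \<in> X \<times> X then N e else 0)" for e
    unfolding Pi0_def using finX by (simp add: count_sum sum.delta')
  have Pi0_set: "set_mset Pi0 \<subseteq> X \<times> X"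
    using cPi0 by (metis (full_types) count_eq_zero_iff subsetI)
  define S where "S = (\<Sum>x\<in>X. replicate_mset (z x) x)"
  have cS: "count S x = (if x \<in> X then z x else 0)" for x
    unfolding S_def by (rule count_sum_rep[OF finX])
  have fstPi0: "image_mset fst Pi0 = Opt"
  proof (rule multiset_eqI)
    fix y
    have "count (image_mset fst Pi0) y = (\<Sum>x\<in>X. count Pi0 (y,x))"
      using cnt_fst[OF Pi0_set finX] by simp
    also have "\<dots> = count Opt y"
    proof (cases "y \<in> X")
      case True then show ?thesis using Nrow[OF True] cPi0 by simp
    next
      case False
      then have "count Opt y = 0" using setO by (meson count_eq_zero_iff subsetD)
      then show ?thesis using False cPi0 by simp
    qed
    finally show "count (image_mset fst Pi0) y = count Opt y" .
  qed
  have sndPi0: "image_mset snd Pi0 = S"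
  proof (rule multiset_eqI)
    fix x
    have "count (image_mset snd Pi0) x = (\<Sum>y\<in>X. count Pi0 (y,x))"
      using cnt_snd[OF Pi0_set finX] by simp
    also have "\<dots> = count S x" using cPi0 cS by (simp add: z_def)
    finally show "count (image_mset snd Pi0) x = count S x" .
  qed
  have sizeS: "size S = k"
    by (metis fstPi0 sndPi0 size_image_mset sizeO)
  have setS: "set_mset S \<subseteq> X" using cS by (metis count_eq_zero_iff subsetI)
  have SK: "S \<in> kmsets X k" using sizeS setS by (simp add: kmsets_def)
  have dkSO: "dk d S Opt \<le> krp_cost X d P k Opt"
  proof -
    obtain zs where zs: "mset zs = Pi0" using ex_mset by blast
    have m1: "mset (map snd zs) = S" using zs sndPi0 by simp
    have m2: "mset (map fst zs) = Opt" using zs fstPi0 by simp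
    have "dk d S Opt \<le> (\<Sum>i<length (map snd zs). d (map snd zs ! i) (map fst zs ! i))"
      using dk_le[OF m1 m2] .
    also have "\<dots> = (\<Sum>i<length zs. (\<lambda>(a,b). d b a) (zs ! i))"
      by (simp add: case_prod_unfold)
    also have "\<dots> = sum_mset (image_mset (\<lambda>(a,b). d b a) Pi0)"
      using sum_nth_mset zs by metis
    also have "\<dots> = sum_mset (image_mset (\<lambda>(a,b). d a b) Pi0)"
    proof -
      have "image_mset (\<lambda>(a,b). d b a) Pi0 = image_mset (\<lambda>(a,b). d a b) Pi0"
        using Pi0_set fms_props(3)[OF fms] by (intro image_mset_cong) auto
      then show ?thesis by simp
    qed
    also have "\<dots> = (\<Sum>e\<in>X \<times> X. real (count Pi0 e) * (\<lambda>(a,b). d a b) e)"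
      using cnt_cost[OF Pi0_set] finX by simp
    also have "\<dots> = (\<Sum>e\<in>X\<times>X. w (Some (fst e), snd e) * M' (Some (fst e), snd e))"
      using cPi0 N_eq by (intro sum.cong refl) (auto simp: w_def case_prod_unfold mult.commute)
    also have "\<dots> = (\<Sum>e\<in>I\<times>X. w e * M' e)"
      unfolding I_def sum_optX[OF finX] by (simp add: w_def)
    also have "\<dots> \<le> krp_cost X d P k Opt" using M'(4) wM by simp
    finally show ?thesis .
  qed

  have costS: "krp_cost X d P k S \<le> 4 * krp_cost X d P k Opt"
  proof -
    have "krp_cost X d P k S = (\<Sum>xs\<in>L. p xs * dk d S (mset xs))"
      unfolding krp_cost_def L_def p_def by simp
    also have "\<dots> \<le> (\<Sum>xs\<in>L. p xs * (dk d S Opt + dk d Opt (mset xs)))"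
    proof (rule sum_mono)
      fix xs assume xs: "xs \<in> L"
      have "dk d S (mset xs) \<le> dk d S Opt + dk d Opt (mset xs)"
        using xs setS setO sizeS sizeO by (intro dk_tri[OF fms]) (auto simp: L_def)
      then show "p xs * dk d S (mset xs) \<le> p xs * (dk d S Opt + dk d Opt (mset xs))"
        using pnn[OF xs] by (rule mult_left_mono)
    qed
    also have "\<dots> = dk d S Opt * (\<Sum>xs\<in>L. p xs) + (\<Sum>xs\<in>L. p xs * dk d Opt (mset xs))"
      by (simp add: distrib_left sum.distrib sum_distrib_right mult.commute)
    also have "\<dots> = dk d S Opt + krp_cost X d P k Opt" using psum costO by simp
    also have "\<dots> \<le> 2 * krp_cost X d P k Opt" using dkSO by simp
    also have "\<dots> \<le> 4 * krp_cost X d P k Opt"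
    proof -
      have "krp_cost X d P k Opt \<ge> 0"
        unfolding costO
      proof (rule sum_nonneg)
        fix xs assume xs: "xs \<in> L"
        have "dk d Opt (mset xs) \<ge> 0"
          using xs setO sizeO by (intro dk_nonneg[OF fms]) (auto simp: L_def)
        then show "p xs * dk d Opt (mset xs) \<ge> 0" using pnn[OF xs] by simp
      qed
      then show ?thesis by simp
    qed
    finally show ?thesis .
  qed
  define ex where "ex = (\<lambda>x. z x - nat \<lfloor>c x\<rfloor>)"
  define R where "R = (\<Sum>x\<in>X. replicate_mset (ex x) x)"
  have cR: "count R x = (if x \<in> X then ex x else 0)" for x
    unfolding R_def by (rule count_sum_rep[OF finX])
  have base_eq: "base_ms X P k = (\<Sum>x\<in>X. replicate_mset (nat \<lfloor>c x\<rfloor>) x)"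
    unfolding base_ms_def c_def by simp
  have cB: "count (base_ms X P k) x = (if x \<in> X then nat \<lfloor>c x\<rfloor> else 0)" for x
    unfolding base_eq by (rule count_sum_rep[OF finX])
  have BRS: "base_ms X P k + R = S"
  proof (rule multiset_eqI)
    fix x
    show "count (base_ms X P k + R) x = count S x"
      using cB cR cS zb[of x] by (auto simp: ex_def)
  qed
  obtain ys where ys: "mset ys = R" using ex_mset by blast
  have len_ys: "length ys = rem_count X P k"
  proof -
    have "size (base_ms X P k) + size R = k" using BRS sizeS by (metis size_union)
    then show ?thesis unfolding rem_count_def using ys by (metis size_mset add_diff_cancel_left')
  qed
  have set_ys: "set ys \<subseteq> X"
    using ys cR by (metis count_eq_zero_iff set_mset_mset subsetI)
  have resid_nn: "resid P k y \<ge> 0" if "y \<in> X" for y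
  proof -
    have "of_int \<lfloor>c y\<rfloor> \<le> c y" by simp
    then have "of_int \<lfloor>c y\<rfloor> / real k \<le> P y" using kpos by (simp add: c_def divide_le_eq)
    then show ?thesis unfolding resid_def c_def[symmetric] by (simp add: c_def)
  qed
  have resid_pos: "resid P k y > 0" if "y \<in> X" "ex y > 0" for y
  proof -
    have "c y \<notin> \<int>" using zb[OF that(1)] that(2) by (auto simp: ex_def)
    then have "c y \<noteq> of_int \<lfloor>c y\<rfloor>" by (metis Ints_of_int)
    then have "of_int \<lfloor>c y\<rfloor> < c y" using of_int_floor_le[of "c y"] by linarith
    then have "of_int \<lfloor>c y\<rfloor> / real k < P y" using kpos by (simp add: c_def divide_less_eq)
    then show ?thesis unfolding resid_def by (simp add: c_def)
  qed
  have rp_pos: "resid_prob X P k y > 0" if "y \<in> set ys" for y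
  proof -
    have "count R y > 0" using that ys by (metis count_greater_zero_iff set_mset_mset)
    then have yX: "y \<in> X" and ey: "ex y > 0" using cR by (auto split: if_splits)
    have "resid P k y > 0" using resid_pos[OF yX ey] .
    moreover have "(\<Sum>y\<in>X. resid P k y) > 0"
      using yX resid_pos[OF yX ey] resid_nn by (intro sum_pos2[OF finX]) auto
    ultimately show ?thesis unfolding resid_prob_def by simp
  qed
  have rp_nn: "resid_prob X P k y \<ge> 0" if "y \<in> X" for y
    unfolding resid_prob_def using resid_nn that
    by (intro divide_nonneg_nonneg sum_nonneg) auto
  have ptpos: "ptilde_prob X P k S > 0"
    unfolding ptilde_prob_def
  proof (rule sum_pos2)
    show "finite {ys. set ys \<subseteq> X \<and> length ys = rem_count X P k \<and> base_ms X P k + mset ys = S}"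
      by (rule finite_subset[OF _ finite_lists_length_eq[OF finX, of "rem_count X P k"]]) auto
    show "ys \<in> {ys. set ys \<subseteq> X \<and> length ys = rem_count X P k \<and> base_ms X P k + mset ys = S}"
      using set_ys len_ys ys BRS by simp
    show "0 < (\<Prod>y\<leftarrow>ys. resid_prob X P k y)"
      using rp_pos by (intro prod_list_pos) auto
    fix ys' assume "ys' \<in> {ys. set ys \<subseteq> X \<and> length ys = rem_count X P k \<and> base_ms X P k + mset ys = S}"
    then show "0 \<le> (\<Prod>y\<leftarrow>ys'. resid_prob X P k y)"
      using rp_nn by (intro prod_list_nonneg) auto
  qed
  show ?thesis using SK ptpos costS by blast
qed

end
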